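(* There is a universal constant $\varkappa>0$ such that the following holds. Let $\bar d\ge1$, $d=2\bar d$, let $\chi$ be a probability distribution on $[0,1]^{\bar d}$, and let $D$ be a database of $n$ i.i.d. samples from $\chi$. Let $\bar f^A_\chi(\mathbf{q})=f^S_\chi(\mathbf{q})/f^C_\chi(\mathbf{q})$ and $f^A_D(\mathbf{q})=f^S_D(\mathbf{q})/f^C_D(\mathbf{q})$, and define $\operatorname{err}(\mathbf{q})=\frac{|\bar f^A_\chi(\mathbf{q})-f^A_D(\mathbf{q})|}{|\bar f^A_\chi(\mathbf{q})|+1}$. For $\xi\in(0,1]$ let $\mathcal{Q}_\xi=\{\mathbf{q}\in\mathcal{Q}: \frac1n f^C_\chi(\mathbf{q})\ge\xi\}$. Then for every $\varepsilon>0$, $$\mathbb{P}_{D\sim\chi}\Big[\sup_{\mathbf{q}\in\mathcal{Q}_\xi}\operatorname{err}(\mathbf{q})\ge\varepsilon\Big]\le\varkappa^{d+1}d\Big(\frac{1+\varepsilon}{\xi\varepsilon}\Big)^d\exp\!\Big(-\varkappa^{-1}\Big(\frac{\xi\varepsilon}{1+\varepsilon}\Big)^2 n\Big).$$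
   Context: A query is $\mathbf{q}=(\mathbf{c},\mathbf{r})$ with $\mathbf{c},\mathbf{r}\in[0,1]^{\bar d}$, ranging over $\mathcal{Q}=\{(\mathbf{c},\mathbf{r})\in[0,1]^d: c_j+r_j\le1\ \forall j\}$. A point $\mathbf{p}$ matches $\mathbf{q}$ if $c_j\le p_j<c_j+r_j$ for all $j$. Fix a measure attribute index $m$. $f^C_D(\mathbf{q})$ is the number of points of $D$ matching $\mathbf{q}$, $f^S_D(\mathbf{q})=\sum_{\mathbf{p}\in D\text{ matching }\mathbf{q}}p_m$, and $f^i_\chi(\mathbf{q})=\mathbb{E}_{D\sim\chi}[f^i_D(\mathbf{q})]$ for $i\in\{S,C\}$ (so $\frac1n f^C_\chi(\mathbf{q})$ is the probability that a sample from $\chi$ matches $\mathbf{q}$). *)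

theory Defs
  imports "HOL-Probability.Probability"
begin

type_synonym point = "nat \<Rightarrow> real"
type_synonym query = "point \<times> point"

definition queries :: "nat \<Rightarrow> query set" where
  "queries db = {(c, r). c \<in> PiE {..<db} (\<lambda>_. {0..1}) \<and> r \<in> PiE {..<db} (\<lambda>_. {0..1})
                  \<and> (\<forall>j<db. c j + r j \<le> 1)}"

definition matches :: "nat \<Rightarrow> point \<Rightarrow> query \<Rightarrow> bool" where
  "matches db p q \<longleftrightarrow> (\<forall>j<db. fst q j \<le> p j \<and> p j < fst q j + snd q j)"

text \<open>A database of n points is a map {..<n} -> points (multiset of samples).\<close>

definition fC_D :: "nat \<Rightarrow> nat \<Rightarrow> (nat \<Rightarrow> point) \<Rightarrow> query \<Rightarrow> real" where
  "fC_D db n D q = real (card {i. i < n \<and> matches db (D i) q})"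

definition fS_D :: "nat \<Rightarrow> nat \<Rightarrow> nat \<Rightarrow> (nat \<Rightarrow> point) \<Rightarrow> query \<Rightarrow> real" where
  "fS_D db m n D q = (\<Sum>i | i < n \<and> matches db (D i) q. D i m)"

definition db_measure :: "nat \<Rightarrow> point measure \<Rightarrow> (nat \<Rightarrow> point) measure" where
  "db_measure n chi = PiM {..<n} (\<lambda>_. chi)"

definition fC_chi :: "nat \<Rightarrow> nat \<Rightarrow> point measure \<Rightarrow> query \<Rightarrow> real" where
  "fC_chi db n chi q = (\<integral>D. fC_D db n D q \<partial>(db_measure n chi))"

definition fS_chi :: "nat \<Rightarrow> nat \<Rightarrow> nat \<Rightarrow> point measure \<Rightarrow> query \<Rightarrow> real" where
  "fS_chi db m n chi q = (\<integral>D. fS_D db m n D q \<partial>(db_measure n chi))"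

definition fA_chi :: "nat \<Rightarrow> nat \<Rightarrow> nat \<Rightarrow> point measure \<Rightarrow> query \<Rightarrow> real" where
  "fA_chi db m n chi q = fS_chi db m n chi q / fC_chi db n chi q"

definition fA_D :: "nat \<Rightarrow> nat \<Rightarrow> nat \<Rightarrow> (nat \<Rightarrow> point) \<Rightarrow> query \<Rightarrow> real" where
  "fA_D db m n D q = fS_D db m n D q / fC_D db n D q"

definition err :: "nat \<Rightarrow> nat \<Rightarrow> nat \<Rightarrow> point measure \<Rightarrow> (nat \<Rightarrow> point) \<Rightarrow> query \<Rightarrow> real" where
  "err db m n chi D q = \<bar>fA_chi db m n chi q - fA_D db m n D q\<bar> / (\<bar>fA_chi db m n chi q\<bar> + 1)"

definition queries_xi :: "nat \<Rightarrow> nat \<Rightarrow> point measure \<Rightarrow> real \<Rightarrow> query set" where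
  "queries_xi db n chi xi = {q \<in> queries db. fC_chi db n chi q / real n \<ge> xi}"

text \<open>Outer probability: the event need not be shown measurable; we bound it by a
  measurable superset.\<close>

definition outer_prob_le :: "'a measure \<Rightarrow> 'a set \<Rightarrow> real \<Rightarrow> bool" where
  "outer_prob_le M E b \<longleftrightarrow> (\<exists>A \<in> sets M. E \<subseteq> A \<and> measure M A \<le> b)"

end

theory Submission
  imports Defs
begin

lemma sum_Pow_prod:
  fixes h :: "nat \<Rightarrow> bool \<Rightarrow> real"
  shows "(\<Sum>S\<in>Pow {..<n}. \<Prod>i<n. h i (i \<in> S)) = (\<Prod>i<n. h i True + h i False)"
proof (induction n)
  case 0
  then show ?case by simp
next
  case (Suc n)
  have P: "Pow {..<Suc n} = Pow {..<n} \<union> insert n ` Pow {..<n}"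
    by (simp add: lessThan_Suc Pow_insert)
  have disj: "Pow {..<n} \<inter> insert n ` Pow {..<n} = {}" by auto
  have inj: "inj_on (insert n) (Pow {..<n})"
  proof (rule inj_onI)
    fix x y assume "x \<in> Pow {..<n}" "y \<in> Pow {..<n}" "insert n x = insert n y"
    then have "n \<notin> x" "n \<notin> y" by auto
    then show "x = y" using \<open>insert n x = insert n y\<close> by (metis Diff_insert_absorb)
  qed
  have e1: "(\<Prod>i<Suc n. h i (i \<in> S)) = (\<Prod>i<n. h i (i \<in> S)) * h n False" if "S \<in> Pow {..<n}" for S
  proof -
    have "n \<notin> S" using that by auto
    then show ?thesis by (simp add: prod.lessThan_Suc)
  qed
  have e2: "(\<Prod>i<Suc n. h i (i \<in> insert n S)) = (\<Prod>i<n. h i (i \<in> S)) * h n True" if "S \<in> Pow {..<n}" for S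
  proof -
    have "(\<Prod>i<n. h i (i \<in> insert n S)) = (\<Prod>i<n. h i (i \<in> S))"
      by (rule prod.cong) auto
    then show ?thesis by (simp add: prod.lessThan_Suc)
  qed
  have "(\<Sum>S\<in>Pow {..<Suc n}. \<Prod>i<Suc n. h i (i \<in> S))
      = (\<Sum>S\<in>Pow {..<n}. \<Prod>i<Suc n. h i (i \<in> S)) + (\<Sum>S\<in>insert n ` Pow {..<n}. \<Prod>i<Suc n. h i (i \<in> S))"
    unfolding P by (rule sum.union_disjoint) (auto simp: disj)
  also have "(\<Sum>S\<in>insert n ` Pow {..<n}. \<Prod>i<Suc n. h i (i \<in> S)) = (\<Sum>S\<in>Pow {..<n}. \<Prod>i<Suc n. h i (i \<in> insert n S))"
    by (rule sum.reindex[OF inj, unfolded comp_def])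
  also have "\<dots> = (\<Sum>S\<in>Pow {..<n}. (\<Prod>i<n. h i (i \<in> S)) * h n True)"
    by (rule sum.cong[OF refl]) (rule e2)
  also have "(\<Sum>S\<in>Pow {..<n}. \<Prod>i<Suc n. h i (i \<in> S)) = (\<Sum>S\<in>Pow {..<n}. (\<Prod>i<n. h i (i \<in> S)) * h n False)"
    by (rule sum.cong[OF refl]) (rule e1)
  finally have calc: "(\<Sum>S\<in>Pow {..<Suc n}. \<Prod>i<Suc n. h i (i \<in> S)) =
     (\<Sum>S\<in>Pow {..<n}. (\<Prod>i<n. h i (i \<in> S)) * h n False) + (\<Sum>S\<in>Pow {..<n}. (\<Prod>i<n. h i (i \<in> S)) * h n True)" .
  have s1: "(\<Sum>S\<in>Pow {..<n}. (\<Prod>i<n. h i (i \<in> S)) * c) = (\<Prod>i<n. h i True + h i False) * c" for c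
    by (simp only: sum_distrib_right[symmetric] Suc.IH)
  show ?case unfolding calc s1 by (simp add: prod.lessThan_Suc algebra_simps)
qed

lemma cosh_le_aux:
  fixes y :: real assumes "y \<ge> 0"
  shows "exp y + exp (-y) \<le> 2 * exp (y\<^sup>2 / 2)"
proof -
  define z where "z = (exp y + exp (-y)) / 2"
  have zp: "z > 0" unfolding z_def by (simp add: add_pos_pos)
  have h1: "- (2*y) * (1/2) + ln (1 + (1/2) * (exp (2*y) - 1)) \<le> (2*y)\<^sup>2 / 8"
    using Hoeffdings_lemma_aux[of "2*y" "1/2"] assms by simp
  have eq: "1 + (1/2) * (exp (2*y) - 1) = exp y * z"
    unfolding z_def by (simp add: exp_minus field_simps flip: exp_add)
  have "ln (exp y * z) = y + ln z" using zp by (simp add: ln_mult)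
  with h1 eq have "- (2*y) * (1/2) + (y + ln z) \<le> (2*y)\<^sup>2 / 8" by simp
  then have "ln z \<le> y\<^sup>2 / 2" by (simp add: power2_eq_square)
  then have "z \<le> exp (y\<^sup>2 / 2)" by (metis exp_ln zp exp_le_cancel_iff)
  then show ?thesis unfolding z_def by simp
qed

lemma cosh_le:
  fixes y :: real
  shows "exp y + exp (-y) \<le> 2 * exp (y\<^sup>2 / 2)"
  using cosh_le_aux[of y] cosh_le_aux[of "-y"] by (cases "y \<ge> 0") (auto simp: add.commute)
lemma rad_one_sided:
  fixes b :: "nat \<Rightarrow> real"
  assumes b: "\<And>i. i < n \<Longrightarrow> \<bar>b i\<bar> \<le> 1" and n: "n > 0" and r: "r \<ge> 0"
  shows "real (card {S\<in>Pow {..<n}. (\<Sum>i<n. if i \<in> S then - b i else b i) \<ge> r})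
           \<le> 2 ^ n * exp (- r\<^sup>2 / (2 * real n))"
proof -
  define l where "l = r / n"
  have l: "l \<ge> 0" using r n by (simp add: l_def)
  let ?s = "\<lambda>S. (\<Sum>i<n. if i \<in> S then - b i else b i)"
  have fin: "finite (Pow {..<n::nat})" by simp
  have "real (card {S\<in>Pow {..<n}. ?s S \<ge> r}) = (\<Sum>S\<in>Pow {..<n}. if ?s S \<ge> r then 1 else 0)"
    by (simp add: sum.If_cases[OF fin] Int_def)
  also have "\<dots> \<le> (\<Sum>S\<in>Pow {..<n}. exp (l * (?s S - r)))"
  proof (rule sum_mono)
    fix S
    show "(if ?s S \<ge> r then 1 else 0) \<le> exp (l * (?s S - r))"
    proof (cases "?s S \<ge> r")
      case True
      then have "0 \<le> l * (?s S - r)" using l by simp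
      then show ?thesis using True by simp
    qed simp
  qed
  also have "\<dots> = exp (- l * r) * (\<Sum>S\<in>Pow {..<n}. \<Prod>i<n. (\<lambda>i B. if B then exp (- l * b i) else exp (l * b i)) i (i \<in> S))"
  proof -
    have "exp (l * (?s S - r)) = exp (- l * r) * (\<Prod>i<n. (\<lambda>i B. if B then exp (- l * b i) else exp (l * b i)) i (i \<in> S))" for S
    proof -
      have "exp (l * ?s S) = (\<Prod>i<n. exp (l * (if i \<in> S then - b i else b i)))"
        by (simp only: sum_distrib_left exp_sum[OF finite_lessThan])
      also have "\<dots> = (\<Prod>i<n. (\<lambda>i B. if B then exp (- l * b i) else exp (l * b i)) i (i \<in> S))"
        by (rule prod.cong) auto
      finally show ?thesis by (simp add: right_diff_distrib exp_diff exp_minus field_simps)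
    qed
    then show ?thesis by (simp add: sum_distrib_left)
  qed
  also have "\<dots> = exp (- l * r) * (\<Prod>i<n. exp (- l * b i) + exp (l * b i))"
    by (subst sum_Pow_prod) simp
  also have "\<dots> \<le> exp (- l * r) * (\<Prod>i<n. 2 * exp ((l * b i)\<^sup>2 / 2))"
    by (intro mult_left_mono prod_mono) (use cosh_le in \<open>auto simp: add.commute\<close>)
  also have "\<dots> \<le> exp (- l * r) * (\<Prod>i<n. 2 * exp (l\<^sup>2 / 2))"
  proof (intro mult_left_mono prod_mono)
    fix i assume "i \<in> {..<n}"
    then have "(b i)\<^sup>2 \<le> 1" using b[of i] by (simp add: abs_square_le_1)
    then have "(l * b i)\<^sup>2 \<le> l\<^sup>2" by (simp add: power_mult_distrib mult_left_le)
    then show "0 \<le> 2 * exp ((l * b i)\<^sup>2 / 2) \<and> 2 * exp ((l * b i)\<^sup>2 / 2) \<le> 2 * exp (l\<^sup>2 / 2)" by simp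
  qed auto
  also have "\<dots> = 2 ^ n * exp (- l * r + n * (l\<^sup>2 / 2))"
  proof -
    have "exp (- l * r + n * (l\<^sup>2 / 2)) = exp (- l * r) * exp (l\<^sup>2 / 2) ^ n"
      by (simp only: exp_add exp_of_nat_mult)
    then show ?thesis by (simp add: power_mult_distrib)
  qed
  also have "- l * r + n * (l\<^sup>2 / 2) = - r\<^sup>2 / (2 * real n)"
    using n by (simp add: l_def field_simps power2_eq_square)
  finally show ?thesis .
qed

lemma rad_tail:
  fixes b :: "nat \<Rightarrow> real"
  assumes b: "\<And>i. i < n \<Longrightarrow> \<bar>b i\<bar> \<le> 1" and n: "n > 0" and r: "r \<ge> 0"
  shows "real (card {S\<in>Pow {..<n}. \<bar>\<Sum>i<n. if i \<in> S then - b i else b i\<bar> \<ge> r})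
           \<le> 2 * 2 ^ n * exp (- r\<^sup>2 / (2 * real n))"
proof -
  let ?s = "\<lambda>S. (\<Sum>i<n. if i \<in> S then - b i else b i)"
  let ?t = "\<lambda>S. (\<Sum>i<n. if i \<in> S then - (- b i) else - b i)"
  have t: "?t S = - ?s S" for S by (simp add: sum_negf[symmetric] if_distrib cong: if_cong)
  have "{S\<in>Pow {..<n}. \<bar>?s S\<bar> \<ge> r} \<subseteq> {S\<in>Pow {..<n}. ?s S \<ge> r} \<union> {S\<in>Pow {..<n}. ?t S \<ge> r}"
    unfolding t by auto
  then have "card {S\<in>Pow {..<n}. \<bar>?s S\<bar> \<ge> r} \<le> card ({S\<in>Pow {..<n}. ?s S \<ge> r} \<union> {S\<in>Pow {..<n}. ?t S \<ge> r})"
    by (intro card_mono) auto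
  also have "\<dots> \<le> card {S\<in>Pow {..<n}. ?s S \<ge> r} + card {S\<in>Pow {..<n}. ?t S \<ge> r}"
    by (rule card_Un_le)
  finally have "real (card {S\<in>Pow {..<n}. \<bar>?s S\<bar> \<ge> r}) \<le> real (card {S\<in>Pow {..<n}. ?s S \<ge> r}) + real (card {S\<in>Pow {..<n}. ?t S \<ge> r})"
    by linarith
  also have "\<dots> \<le> 2 ^ n * exp (- r\<^sup>2 / (2 * real n)) + 2 ^ n * exp (- r\<^sup>2 / (2 * real n))"
    by (intro add_mono rad_one_sided) (use b n r in auto)
  finally show ?thesis by simp
qed
lemma card_small_subsets:
  "card {K. K \<subseteq> {..<N::nat} \<and> card K \<le> d} \<le> (\<Sum>i\<le>d. N choose i)"
proof -
  have "{K. K \<subseteq> {..<N::nat} \<and> card K \<le> d} = (\<Union>i\<in>{..d}. {K. K \<subseteq> {..<N} \<and> card K = i})"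
    by auto
  then have "card {K. K \<subseteq> {..<N::nat} \<and> card K \<le> d} \<le> (\<Sum>i\<le>d. card {K. K \<subseteq> {..<N} \<and> card K = i})"
  proof -
    have "card (\<Union>i\<in>{..d}. {K. K \<subseteq> {..<N} \<and> card K = i}) \<le> (\<Sum>i\<le>d. card {K. K \<subseteq> {..<N} \<and> card K = i})"
      by (rule card_UN_le) simp
    then show ?thesis using \<open>{K. K \<subseteq> {..<N::nat} \<and> card K \<le> d} = _\<close> by simp
  qed
  also have "\<dots> = (\<Sum>i\<le>d. N choose i)"
    by (rule sum.cong) (simp_all add: n_subsets)
  finally show ?thesis .
qed

lemma binom_sum_bound:
  assumes "1 \<le> d" "d \<le> N"
  shows "real (\<Sum>i\<le>d. N choose i) \<le> (exp 1 * N / d) ^ d"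
proof -
  define y where "y = real d / real N"
  have N: "N > 0" using assms by simp
  have y0: "y > 0" and y1: "y \<le> 1" using assms N by (auto simp: y_def)
  have "y ^ d * real (\<Sum>i\<le>d. N choose i) = (\<Sum>i\<le>d. real (N choose i) * y ^ d)"
    by (simp add: sum_distrib_left mult.commute)
  also have "\<dots> \<le> (\<Sum>i\<le>d. real (N choose i) * y ^ i)"
    by (intro sum_mono mult_left_mono power_decreasing) (use y0 y1 in auto)
  also have "\<dots> \<le> (\<Sum>i\<le>N. real (N choose i) * y ^ i)"
    by (intro sum_mono2) (use assms y0 in auto)
  also have "\<dots> = (y + 1) ^ N"
    by (simp add: binomial_ring mult.commute)
  also have "\<dots> = (1 + real d / real N) ^ N" by (simp add: y_def add.commute)
  also have "\<dots> \<le> exp (real d)"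
    by (rule exp_ge_one_plus_x_over_n_power_n) (use N in auto)
  finally have *: "y ^ d * real (\<Sum>i\<le>d. N choose i) \<le> exp (real d)" .
  have "exp (real d) = exp 1 ^ d" by (metis exp_of_nat_mult mult.right_neutral)
  with * have "real (\<Sum>i\<le>d. N choose i) \<le> exp 1 ^ d / y ^ d"
    using y0 by (simp add: field_simps)
  also have "\<dots> = (exp 1 * N / d) ^ d"
    using assms by (simp add: y_def power_divide field_simps)
  finally show ?thesis .
qed

definition bbox :: "nat \<Rightarrow> nat \<Rightarrow> (nat \<Rightarrow> nat \<Rightarrow> real) \<Rightarrow> nat set \<Rightarrow> nat set" where
  "bbox db N Z K = {j. j < N \<and> K \<noteq> {} \<and> (\<forall>l<db. (\<exists>k\<in>K. Z k l \<le> Z j l) \<and> (\<exists>k\<in>K. Z j l \<le> Z k l))}"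

lemma trace_in_bbox:
  fixes c e :: "nat \<Rightarrow> real"
  assumes db: "db \<ge> 1"
  shows "{j. j < N \<and> (\<forall>l<db. c l \<le> Z j l \<and> Z j l < e l)} \<in> bbox db N Z ` {K. K \<subseteq> {..<N} \<and> card K \<le> 2 * db}"
proof -
  define T where "T = {j. j < N \<and> (\<forall>l<db. c l \<le> Z j l \<and> Z j l < e l)}"
  show ?thesis
  proof (cases "T = {}")
    case True
    then have "bbox db N Z {} = T" by (simp add: bbox_def)
    then show ?thesis unfolding T_def[symmetric] by (intro image_eqI[of _ _ "{}"]) auto
  next
    case False
    have finT: "finite T" unfolding T_def by auto
    have "\<forall>l. \<exists>k\<in>T. \<forall>j\<in>T. Z k l \<le> Z j l"
    proof
      fix l
      have "Min ((\<lambda>j. Z j l) ` T) \<in> (\<lambda>j. Z j l) ` T" using finT False by (intro Min_in) auto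
      then obtain k where "k \<in> T" "Z k l = Min ((\<lambda>j. Z j l) ` T)" by auto
      then show "\<exists>k\<in>T. \<forall>j\<in>T. Z k l \<le> Z j l" using finT by (metis Min_le finite_imageI imageI)
    qed
    then obtain kmin where kmin: "\<And>l. kmin l \<in> T" "\<And>l j. j \<in> T \<Longrightarrow> Z (kmin l) l \<le> Z j l" by metis
    have "\<forall>l. \<exists>k\<in>T. \<forall>j\<in>T. Z j l \<le> Z k l"
    proof
      fix l
      have "Max ((\<lambda>j. Z j l) ` T) \<in> (\<lambda>j. Z j l) ` T" using finT False by (intro Max_in) auto
      then obtain k where "k \<in> T" "Z k l = Max ((\<lambda>j. Z j l) ` T)" by auto
      then show "\<exists>k\<in>T. \<forall>j\<in>T. Z j l \<le> Z k l" using finT by (metis Max_ge finite_imageI imageI)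
    qed
    then obtain kmax where kmax: "\<And>l. kmax l \<in> T" "\<And>l j. j \<in> T \<Longrightarrow> Z j l \<le> Z (kmax l) l" by metis
    define K where "K = kmin ` {..<db} \<union> kmax ` {..<db}"
    have KT: "K \<subseteq> T" using kmin kmax by (auto simp: K_def)
    have Kne: "K \<noteq> {}" using db by (auto simp: K_def lessThan_empty_iff)
    have "card K \<le> card (kmin ` {..<db}) + card (kmax ` {..<db})" unfolding K_def by (rule card_Un_le)
    also have "\<dots> \<le> db + db" by (intro add_mono card_image_le[THEN order_trans]) auto
    finally have cK: "card K \<le> 2 * db" by simp
    have "bbox db N Z K = T"
    proof
      show "bbox db N Z K \<subseteq> T"
      proof
        fix j assume j: "j \<in> bbox db N Z K"
        have "c l \<le> Z j l \<and> Z j l < e l" if l: "l < db" for l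
        proof -
          from j l obtain k k' where k: "k \<in> K" "Z k l \<le> Z j l" and k': "k' \<in> K" "Z j l \<le> Z k' l"
            by (auto simp: bbox_def) (metis)
          have "c l \<le> Z k l" "Z k' l < e l" using KT k k' l by (auto simp: T_def)
          then show ?thesis using k k' by linarith
        qed
        then show "j \<in> T" using j by (auto simp: bbox_def T_def)
      qed
    next
      show "T \<subseteq> bbox db N Z K"
      proof
        fix j assume j: "j \<in> T"
        have "(\<exists>k\<in>K. Z k l \<le> Z j l) \<and> (\<exists>k\<in>K. Z j l \<le> Z k l)" if "l < db" for l
          using that kmin(2)[OF j, of l] kmax(2)[OF j, of l] by (auto simp: K_def)
        then show "j \<in> bbox db N Z K" using j Kne by (auto simp: bbox_def T_def)
      qed
    qed
    then show ?thesis unfolding T_def[symmetric] using KT cK by (intro image_eqI[of _ _ K]) (auto simp: T_def)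
  qed
qed
definition M0 :: "nat \<Rightarrow> point measure" where "M0 db = PiM {..<db} (\<lambda>_. restrict_space borel {0..1::real})"

type_synonym idx = "bool \<times> rat list \<times> rat list"

definition inbox :: "nat \<Rightarrow> idx \<Rightarrow> point \<Rightarrow> bool" where
  "inbox db k p \<longleftrightarrow> (\<forall>l<db. of_rat (fst (snd k) ! l) \<le> p l \<and> p l < of_rat (snd (snd k) ! l))"

definition gk :: "nat \<Rightarrow> nat \<Rightarrow> idx \<Rightarrow> point \<Rightarrow> real" where
  "gk db m k p = (if inbox db k p then (if fst k then p m else 1) else 0)"

lemma coord_meas: assumes "sets chi = sets (M0 db)" "j < db" shows "(\<lambda>p. p j) \<in> borel_measurable chi"
proof -
  have "(\<lambda>p. p j) \<in> M0 db \<rightarrow>\<^sub>M restrict_space borel {0..1::real}"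
    unfolding M0_def using assms(2) by (intro measurable_component_singleton) auto
  then have "(\<lambda>p. p j) \<in> borel_measurable (M0 db)"
    by (rule measurable_compose[OF _ measurable_restrict_space1]) simp
  then show ?thesis using measurable_cong_sets[OF assms(1) refl] by blast
qed

lemma space_chi: assumes "sets chi = sets (M0 db)" shows "space chi = PiE {..<db} (\<lambda>_. {0..1::real})"
proof -
  have "space chi = space (M0 db)" using assms by (rule sets_eq_imp_space_eq)
  then show ?thesis by (simp add: M0_def space_PiM)
qed

lemma inbox_meas: assumes "sets chi = sets (M0 db)" shows "Measurable.pred chi (inbox db k)"
proof -
  have [measurable]: "(\<lambda>p. p j) \<in> borel_measurable chi" if "j < db" for j using coord_meas[OF assms that] .
  show ?thesis unfolding inbox_def by measurable
qed

lemma gk_meas: assumes "sets chi = sets (M0 db)" "m < db" shows "gk db m k \<in> borel_measurable chi"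
proof -
  have [measurable]: "(\<lambda>p. p m) \<in> borel_measurable chi" using coord_meas[OF assms] .
  have [measurable]: "Measurable.pred chi (inbox db k)" using inbox_meas[OF assms(1)] .
  show ?thesis unfolding gk_def by measurable
qed

lemma gk_bounds: assumes "sets chi = sets (M0 db)" "m < db" "p \<in> space chi"
  shows "0 \<le> gk db m k p" "gk db m k p \<le> 1"
  using assms space_chi[OF assms(1)] by (auto simp: gk_def PiE_def Pi_def)

lemma integral_component:
  fixes chi :: "point measure" and g :: "point \<Rightarrow> real"
  assumes "prob_space chi" and g: "g \<in> borel_measurable chi" and i: "i \<in> J"
  shows "(\<integral>D. g (D i) \<partial>PiM J (\<lambda>_. chi)) = (\<integral>p. g p \<partial>chi)"
proof -
  interpret chi: prob_space chi by fact
  have "(\<integral>D. g (D i) \<partial>PiM J (\<lambda>_. chi)) = (\<integral>p. g p \<partial>distr (PiM J (\<lambda>_. chi)) chi (\<lambda>D. D i))"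
    using integral_distr[OF measurable_component_singleton[OF i] g] by simp
  also have "\<dots> = (\<integral>p. g p \<partial>chi)"
    using distr_PiM_component[of J "\<lambda>_. chi" i] i chi.prob_space_axioms by simp
  finally show ?thesis .
qed

lemma integral_sum_components:
  fixes chi :: "point measure" and g :: "point \<Rightarrow> real"
  assumes "prob_space chi" and g: "g \<in> borel_measurable chi" and gb: "\<And>p. p \<in> space chi \<Longrightarrow> \<bar>g p\<bar> \<le> 1"
    and J: "finite J"
  shows "(\<integral>D. (\<Sum>i\<in>J. g (D i)) \<partial>PiM J (\<lambda>_. chi)) = real (card J) * (\<integral>p. g p \<partial>chi)"
proof -
  interpret chi: prob_space chi by fact
  have intg: "integrable chi g"
    by (rule chi.integrable_const_bound[where B=1]) (use gb g in auto)
  have "(\<integral>D. (\<Sum>i\<in>J. g (D i)) \<partial>PiM J (\<lambda>_. chi)) = (\<Sum>i\<in>J. \<integral>D. g (D i) \<partial>PiM J (\<lambda>_. chi))"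
  proof (rule Bochner_Integration.integral_sum)
    fix i assume i: "i \<in> J"
    have "integrable (distr (PiM J (\<lambda>_. chi)) chi (\<lambda>D. D i)) g"
      using distr_PiM_component[of J "\<lambda>_. chi" i] i intg chi.prob_space_axioms by simp
    then show "integrable (PiM J (\<lambda>_. chi)) (\<lambda>D. g (D i))"
      by (subst (asm) integrable_distr_eq) (use i g in auto)
  qed
  also have "\<dots> = (\<Sum>i\<in>J. \<integral>p. g p \<partial>chi)"
    by (rule sum.cong[OF refl]) (rule integral_component[OF assms(1) g])
  also have "\<dots> = real (card J) * (\<integral>p. g p \<partial>chi)" by simp
  finally show ?thesis .
qed

lemma indep_components:
  assumes "prob_space chi" "J \<noteq> {}"
  shows "prob_space.indep_vars (PiM J (\<lambda>_. chi)) (\<lambda>_. chi) (\<lambda>j D. D j) J"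
proof -
  interpret chi: prob_space chi by fact
  interpret P: prob_space "PiM J (\<lambda>_. chi)" by (intro prob_space_PiM) (use assms in auto)
  show ?thesis
  proof (subst P.indep_vars_iff_distr_eq_PiM')
    show "distr (PiM J (\<lambda>_. chi)) (PiM J (\<lambda>_. chi)) (\<lambda>x. \<lambda>i\<in>J. x i) = PiM J (\<lambda>i. distr (PiM J (\<lambda>_. chi)) chi (\<lambda>D. D i))"
    proof -
      have "distr (PiM J (\<lambda>_. chi)) (PiM J (\<lambda>_. chi)) (\<lambda>x. \<lambda>i\<in>J. x i) = distr (PiM J (\<lambda>_. chi)) (PiM J (\<lambda>_. chi)) (\<lambda>x. x)"
        by (rule distr_cong) (auto simp: space_PiM PiE_def extensional_restrict)
      also have "\<dots> = PiM J (\<lambda>_. chi)" by (rule distr_id)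
      also have "\<dots> = PiM J (\<lambda>i. distr (PiM J (\<lambda>_. chi)) chi (\<lambda>D. D i))"
        by (rule PiM_cong[OF refl]) (use distr_PiM_component[of J "\<lambda>_. chi"] chi.prob_space_axioms in auto)
      finally show ?thesis .
    qed
  qed (use assms in auto)
qed

lemma ghost_hoeffding:
  fixes chi :: "point measure" and g :: "point \<Rightarrow> real"
  assumes chi: "prob_space chi" and g: "g \<in> borel_measurable chi"
    and gb: "\<And>p. p \<in> space chi \<Longrightarrow> 0 \<le> g p \<and> g p \<le> 1"
    and J: "finite J" "J \<noteq> {}" and r: "r \<ge> 0"
  shows "measure (PiM J (\<lambda>_. chi)) {D \<in> space (PiM J (\<lambda>_. chi)). \<bar>(\<Sum>j\<in>J. g (D j)) - real (card J) * (\<integral>p. g p \<partial>chi)\<bar> \<ge> r}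
           \<le> 2 * exp (- 2 * r\<^sup>2 / real (card J))"
proof -
  interpret chi: prob_space chi by fact
  interpret P: prob_space "PiM J (\<lambda>_. chi)" by (intro prob_space_PiM) (use chi in auto)
  have ind: "P.indep_vars (\<lambda>_. borel) (\<lambda>j D. g (D j)) J"
    using P.indep_vars_compose2[OF indep_components[OF chi J(2)], of "\<lambda>_. g" "\<lambda>_. borel"] g by simp
  interpret H: Hoeffding_ineq "PiM J (\<lambda>_. chi)" J "\<lambda>j D. g (D j)" "\<lambda>_. 0" "\<lambda>_. 1" "\<Sum>j\<in>J. P.expectation (\<lambda>D. g (D j))"
  proof unfold_locales
    fix i assume i: "i \<in> J"
    show "AE x in PiM J (\<lambda>_. chi). g (x i) \<in> {0..1}"
      by (rule AE_PiM_component[where M="\<lambda>_. chi"]) (use i gb chi.prob_space_axioms in auto)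
  qed (use J ind in auto)
  have mu: "(\<Sum>j\<in>J. P.expectation (\<lambda>D. g (D j))) = real (card J) * (\<integral>p. g p \<partial>chi)"
  proof -
    have "(\<Sum>j\<in>J. P.expectation (\<lambda>D. g (D j))) = (\<Sum>j\<in>J. (\<integral>p. g p \<partial>chi))"
      by (rule sum.cong[OF refl]) (rule integral_component[OF chi g])
    then show ?thesis by simp
  qed
  have "measure (PiM J (\<lambda>_. chi)) {D \<in> space (PiM J (\<lambda>_. chi)). \<bar>(\<Sum>j\<in>J. g (D j)) - (\<Sum>j\<in>J. P.expectation (\<lambda>D. g (D j)))\<bar> \<ge> r}
           \<le> 2 * exp (- 2 * r\<^sup>2 / (\<Sum>i\<in>J. (1 - 0)\<^sup>2))"
    by (rule H.Hoeffding_ineq_abs_ge) (use r J in auto)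
  then show ?thesis unfolding mu by simp
qed
lemma sum_shift_half:
  fixes n :: nat shows "(\<Sum>j\<in>{n..<2*n}. f j) = (\<Sum>i<n. f (n + i))"
proof -
  have "(\<Sum>j\<in>{0+n..<n+n}. f j) = (\<Sum>i\<in>{0..<n}. f (i + n))" by (rule sum.shift_bounds_nat_ivl)
  then show ?thesis by (simp add: mult_2 atLeast0LessThan add.commute)
qed

lemma symmetrization:
  fixes chi :: "point measure" and G :: "'k::countable \<Rightarrow> point \<Rightarrow> real"
  assumes chi: "prob_space chi"
    and Gm: "\<And>k. G k \<in> borel_measurable chi"
    and Gb: "\<And>k p. p \<in> space chi \<Longrightarrow> 0 \<le> G k p \<and> G k p \<le> 1"
    and n: "n > 0" and s: "s > 0" and ns: "2 * exp (- real n * s\<^sup>2 / 2) \<le> 1/2"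
  shows "measure (PiM {..<n} (\<lambda>_. chi)) {D \<in> space (PiM {..<n} (\<lambda>_. chi)).
             \<exists>k. \<bar>(\<Sum>i<n. G k (D i)) - real n * (\<integral>p. G k p \<partial>chi)\<bar> \<ge> real n * s}
         \<le> 2 * measure (PiM {..<2*n} (\<lambda>_. chi)) {Z \<in> space (PiM {..<2*n} (\<lambda>_. chi)).
             \<exists>k. \<bar>(\<Sum>i<n. G k (Z i)) - (\<Sum>i<n. G k (Z (n + i)))\<bar> \<ge> real n * s / 2}"
proof -
  interpret chi: prob_space chi by fact
  interpret PS: product_prob_space "\<lambda>_. chi" by unfold_locales
  let ?I = "{..<n}" and ?J = "{n..<2*n}"
  let ?P1 = "PiM ?I (\<lambda>_. chi)" and ?PJ = "PiM ?J (\<lambda>_. chi)" and ?P2 = "PiM {..<2*n} (\<lambda>_. chi)"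
  interpret P1: prob_space ?P1 by (intro prob_space_PiM) (use chi in auto)
  interpret PJ: prob_space ?PJ by (intro prob_space_PiM) (use chi in auto)
  interpret P2: prob_space ?P2 by (intro prob_space_PiM) (use chi in auto)
  have IJ: "?I \<union> ?J = {..<2*n}" by auto
  have IJd: "?I \<inter> ?J = {}" by auto
  define E where "E k = (\<integral>p. G k p \<partial>chi)" for k
  define A where "A = {D \<in> space ?P1. \<exists>k. \<bar>(\<Sum>i<n. G k (D i)) - real n * E k\<bar> \<ge> real n * s}"
  define B where "B = {Z \<in> space ?P2. \<exists>k. \<bar>(\<Sum>i<n. G k (Z i)) - (\<Sum>i<n. G k (Z (n + i)))\<bar> \<ge> real n * s / 2}"
  have [measurable]: "(\<lambda>D. G k (D i)) \<in> borel_measurable (PiM K (\<lambda>_. chi))" if "i \<in> K" for k i K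
    by (rule measurable_compose[OF measurable_component_singleton[OF that] Gm])
  have Asets: "A \<in> sets ?P1" unfolding A_def by measurable
  have Bsets: "B \<in> sets ?P2" unfolding B_def by measurable
  have mm: "(\<lambda>x. merge ?I ?J (D, x)) \<in> ?PJ \<rightarrow>\<^sub>M ?P2" if "D \<in> space ?P1" for D
  proof -
    have "(\<lambda>x. merge ?I ?J (D, x)) \<in> ?PJ \<rightarrow>\<^sub>M PiM (?I \<union> ?J) (\<lambda>_. chi)"
      using measurable_compose[OF measurable_Pair1'[OF that] measurable_merge] by (simp add: comp_def)
    then show ?thesis unfolding IJ .
  qed
  have key: "emeasure ?PJ {D' \<in> space ?PJ. merge ?I ?J (D, D') \<in> B} \<ge> ennreal (1/2)" if D: "D \<in> A" for D
  proof -
    from D obtain k where DS: "D \<in> space ?P1" and k: "\<bar>(\<Sum>i<n. G k (D i)) - real n * E k\<bar> \<ge> real n * s"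
      by (auto simp: A_def)
    define Bad where "Bad = {D' \<in> space ?PJ. \<bar>(\<Sum>j\<in>?J. G k (D' j)) - real (card ?J) * E k\<bar> \<ge> real n * s / 2}"
    have cardJ: "card ?J = n" by simp
    have "measure ?PJ Bad \<le> 2 * exp (- 2 * (real n * s / 2)\<^sup>2 / real (card ?J))"
      unfolding Bad_def E_def
      by (rule ghost_hoeffding[OF chi Gm]) (use Gb n s in auto)
    also have "- 2 * (real n * s / 2)\<^sup>2 / real (card ?J) = - real n * s\<^sup>2 / 2"
      using n unfolding cardJ by (simp add: field_simps power2_eq_square)
    finally have Bad: "measure ?PJ Bad \<le> 1/2" using ns by simp
    have Badm: "Bad \<in> sets ?PJ" unfolding Bad_def by measurable
    have sub: "space ?PJ - Bad \<subseteq> {D' \<in> space ?PJ. merge ?I ?J (D, D') \<in> B}"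
    proof
      fix D' assume D': "D' \<in> space ?PJ - Bad"
      have "merge ?I ?J (D, D') \<in> space (PiM (?I \<union> ?J) (\<lambda>_. chi))"
        using measurable_space[OF measurable_merge, of "(D, D')" ?I "\<lambda>_. chi" ?J] DS D'
        by (simp add: space_pair_measure)
      then have ms: "merge ?I ?J (D, D') \<in> space ?P2" unfolding IJ .
      have s1: "(\<Sum>i<n. G k (merge ?I ?J (D, D') i)) = (\<Sum>i<n. G k (D i))"
        by (rule sum.cong) (auto simp: merge_def)
      have s2: "(\<Sum>i<n. G k (merge ?I ?J (D, D') (n + i))) = (\<Sum>j\<in>?J. G k (D' j))"
        unfolding sum_shift_half by (rule sum.cong) (auto simp: merge_def)
      have "\<bar>(\<Sum>j\<in>?J. G k (D' j)) - real n * E k\<bar> < real n * s / 2"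
        using D' unfolding Bad_def cardJ by auto
      then have "\<bar>(\<Sum>i<n. G k (D i)) - (\<Sum>j\<in>?J. G k (D' j))\<bar> \<ge> real n * s / 2"
        using k by linarith
      then have "\<bar>(\<Sum>i<n. G k (merge ?I ?J (D, D') i)) - (\<Sum>i<n. G k (merge ?I ?J (D, D') (n + i)))\<bar> \<ge> real n * s / 2"
        unfolding s1 s2 .
      then have "\<exists>k. \<bar>(\<Sum>i<n. G k (merge ?I ?J (D, D') i)) - (\<Sum>i<n. G k (merge ?I ?J (D, D') (n + i)))\<bar> \<ge> real n * s / 2"
        by blast
      then show "D' \<in> {D' \<in> space ?PJ. merge ?I ?J (D, D') \<in> B}"
        using D' ms unfolding B_def by auto
    qed
    have "1/2 \<le> 1 - measure ?PJ Bad" using Bad by simp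
    also have "\<dots> = measure ?PJ (space ?PJ - Bad)" using Badm by (simp add: PJ.prob_compl)
    finally have "ennreal (1/2) \<le> ennreal (measure ?PJ (space ?PJ - Bad))"
      by (rule ennreal_leI)
    also have "\<dots> = emeasure ?PJ (space ?PJ - Bad)" by (simp add: PJ.emeasure_eq_measure)
    also have "\<dots> \<le> emeasure ?PJ {D' \<in> space ?PJ. merge ?I ?J (D, D') \<in> B}"
      by (rule emeasure_mono[OF sub]) (use Bsets DS mm[OF DS] in \<open>measurable\<close>)
    finally show ?thesis .
  qed
  have "ennreal (1/2) * emeasure ?P1 A = (\<integral>\<^sup>+D. ennreal (1/2) * indicator A D \<partial>?P1)"
    using Asets by (subst nn_integral_cmult) auto
  also have "\<dots> \<le> (\<integral>\<^sup>+D. (\<integral>\<^sup>+D'. indicator B (merge ?I ?J (D, D')) \<partial>?PJ) \<partial>?P1)"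
  proof (rule nn_integral_mono)
    fix D assume DS: "D \<in> space ?P1"
    show "ennreal (1/2) * indicator A D \<le> (\<integral>\<^sup>+D'. indicator B (merge ?I ?J (D, D')) \<partial>?PJ)"
    proof (cases "D \<in> A")
      case True
      have "(\<integral>\<^sup>+D'. indicator B (merge ?I ?J (D, D')) \<partial>?PJ) = (\<integral>\<^sup>+D'. indicator {D' \<in> space ?PJ. merge ?I ?J (D, D') \<in> B} D' \<partial>?PJ)"
        by (rule nn_integral_cong) (auto simp: indicator_def)
      also have "\<dots> = emeasure ?PJ {D' \<in> space ?PJ. merge ?I ?J (D, D') \<in> B}"
        by (rule nn_integral_indicator) (use Bsets DS mm[OF DS] in \<open>measurable\<close>)
      finally show ?thesis using key[OF True] True by simp
    qed simp
  qed
  also have "\<dots> = (\<integral>\<^sup>+Z. indicator B Z \<partial>PiM (?I \<union> ?J) (\<lambda>_. chi))"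
    by (rule PS.product_nn_integral_fold[symmetric]) (use Bsets IJ IJd in simp_all)
  also have "\<dots> = emeasure ?P2 B" unfolding IJ using Bsets by simp
  finally have "ennreal (1/2) * emeasure ?P1 A \<le> emeasure ?P2 B" .
  then have "ennreal (1/2) * ennreal (measure ?P1 A) \<le> ennreal (measure ?P2 B)"
    by (simp only: P1.emeasure_eq_measure P2.emeasure_eq_measure)
  then have "ennreal (1/2 * measure ?P1 A) \<le> ennreal (measure ?P2 B)"
    by (subst ennreal_mult) auto
  then have "1/2 * measure ?P1 A \<le> measure ?P2 B" by (subst (asm) ennreal_le_iff) auto
  then show ?thesis unfolding A_def B_def E_def by simp
qed
definition swp :: "nat \<Rightarrow> nat set \<Rightarrow> nat \<Rightarrow> nat" where
  "swp n S j = (if j < n \<and> j \<in> S then n + j else if n \<le> j \<and> j < 2*n \<and> j - n \<in> S then j - n else j)"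

lemma swp_range: "j < 2*n \<Longrightarrow> swp n S j < 2*n"
  by (auto simp: swp_def)

lemma swp_invol: "S \<subseteq> {..<n} \<Longrightarrow> swp n S (swp n S j) = j"
  by (auto simp: swp_def)

lemma swp_inj: "S \<subseteq> {..<n} \<Longrightarrow> inj_on (swp n S) {..<2*n}"
  by (metis inj_onI swp_invol)

lemma swap_measure:
  fixes chi :: "point measure"
  assumes chi: "prob_space chi" and S: "S \<subseteq> {..<n}" and Bs: "B \<in> sets (PiM {..<2*n} (\<lambda>_. chi))"
  shows "measure (PiM {..<2*n} (\<lambda>_. chi)) B =
         measure (PiM {..<2*n} (\<lambda>_. chi)) ((\<lambda>Z. \<lambda>j\<in>{..<2*n}. Z (swp n S j)) -` B \<inter> space (PiM {..<2*n} (\<lambda>_. chi)))"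
proof -
  let ?P = "PiM {..<2*n} (\<lambda>_. chi)"
  have meas: "(\<lambda>Z. \<lambda>j\<in>{..<2*n}. Z (swp n S j)) \<in> ?P \<rightarrow>\<^sub>M ?P"
    by (rule measurable_restrict) (rule measurable_component_singleton, simp add: swp_range)
  have "distr ?P (PiM {..<2*n} (\<lambda>i. (\<lambda>_. chi) (swp n S i))) (\<lambda>Z. \<lambda>j\<in>{..<2*n}. Z (swp n S j))
        = PiM {..<2*n} (\<lambda>i. (\<lambda>_. chi) (swp n S i))"
    by (rule distr_PiM_reindex) (use chi swp_inj[OF S] swp_range in auto)
  then have d: "distr ?P ?P (\<lambda>Z. \<lambda>j\<in>{..<2*n}. Z (swp n S j)) = ?P" by simp
  have "measure ?P B = measure (distr ?P ?P (\<lambda>Z. \<lambda>j\<in>{..<2*n}. Z (swp n S j))) B" by (simp only: d)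
  also have "\<dots> = measure ?P ((\<lambda>Z. \<lambda>j\<in>{..<2*n}. Z (swp n S j)) -` B \<inter> space ?P)"
    by (rule measure_distr[OF meas Bs])
  finally show ?thesis .
qed

lemma swap_bound:
  fixes chi :: "point measure" and G :: "'k::countable \<Rightarrow> point \<Rightarrow> real" and n :: nat
  assumes chi: "prob_space chi"
    and Gm: "\<And>k. G k \<in> borel_measurable chi"
    and Gb: "\<And>k p. p \<in> space chi \<Longrightarrow> 0 \<le> G k p \<and> G k p \<le> 1"
    and n: "n > 0" and r: "r \<ge> 0"
    and Pat: "\<And>Z. Z \<in> space (PiM {..<2*n} (\<lambda>_. chi)) \<Longrightarrow>
                finite ((\<lambda>k. \<lambda>j\<in>{..<2*n}. G k (Z j)) ` UNIV) \<and> real (card ((\<lambda>k. \<lambda>j\<in>{..<2*n}. G k (Z j)) ` UNIV)) \<le> C"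
  shows "measure (PiM {..<2*n} (\<lambda>_. chi)) {Z \<in> space (PiM {..<2*n} (\<lambda>_. chi)).
             \<exists>k. \<bar>(\<Sum>i<n. G k (Z i)) - (\<Sum>i<n. G k (Z (n + i)))\<bar> \<ge> r}
         \<le> C * (2 * exp (- r\<^sup>2 / (2 * real n)))"
proof -
  interpret chi: prob_space chi by fact
  let ?P = "PiM {..<2*n} (\<lambda>_. chi)"
  interpret P: prob_space ?P by (intro prob_space_PiM) (use chi in auto)
  define B where "B = {Z \<in> space ?P. \<exists>k. \<bar>(\<Sum>i<n. G k (Z i)) - (\<Sum>i<n. G k (Z (n + i)))\<bar> \<ge> r}"
  define sw :: "nat set \<Rightarrow> (nat \<Rightarrow> point) \<Rightarrow> (nat \<Rightarrow> point)" where "sw S = (\<lambda>Z. \<lambda>j\<in>{..<2*n}. Z (swp n S j))" for S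
  have [measurable]: "(\<lambda>D. G k (D i)) \<in> borel_measurable ?P" if "i < 2*n" for k i
    by (rule measurable_compose[OF measurable_component_singleton[of i] Gm]) (use that in simp)
  have Bsets: "B \<in> sets ?P" unfolding B_def by measurable
  have swm: "sw S \<in> ?P \<rightarrow>\<^sub>M ?P" for S
    unfolding sw_def by (rule measurable_restrict) (rule measurable_component_singleton, simp add: swp_range)
  define Cb where "Cb = C * (2 * 2 ^ n * exp (- r\<^sup>2 / (2 * real n)))"
  have point: "(\<Sum>S\<in>Pow {..<n}. indicator (sw S -` B \<inter> space ?P) Z) \<le> Cb" if Z: "Z \<in> space ?P" for Z
  proof -
    define Pt where "Pt = (\<lambda>k. \<lambda>j\<in>{..<2*n}. G k (Z j)) ` UNIV"
    have finPt: "finite Pt" and cPt: "real (card Pt) \<le> C" using Pat[OF Z] by (auto simp: Pt_def)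
    have Zc: "Z j \<in> space chi" if "j < 2*n" for j using Z that by (auto simp: space_PiM PiE_def Pi_def)
    define T where "T a = {S\<in>Pow {..<n}. \<bar>\<Sum>i<n. if i \<in> S then - (a i - a (n+i)) else a i - a (n+i)\<bar> \<ge> r}" for a :: "nat \<Rightarrow> real"
    have sub: "{S\<in>Pow {..<n}. sw S Z \<in> B} \<subseteq> (\<Union>a\<in>Pt. T a)"
    proof
      fix S assume S: "S \<in> {S\<in>Pow {..<n}. sw S Z \<in> B}"
      then obtain k where k: "\<bar>(\<Sum>i<n. G k (sw S Z i)) - (\<Sum>i<n. G k (sw S Z (n + i)))\<bar> \<ge> r"
        by (auto simp: B_def)
      define a where "a = (\<lambda>j\<in>{..<2*n}. G k (Z j))"
      have aP: "a \<in> Pt" by (auto simp: a_def Pt_def)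
      have "(\<Sum>i<n. G k (sw S Z i)) - (\<Sum>i<n. G k (sw S Z (n + i)))
            = (\<Sum>i<n. G k (sw S Z i) - G k (sw S Z (n + i)))" by (simp add: sum_subtractf)
      also have "\<dots> = (\<Sum>i<n. if i \<in> S then - (a i - a (n+i)) else a i - a (n+i))"
        using S by (intro sum.cong) (auto simp: sw_def swp_def a_def)
      finally have "S \<in> T a" using k S by (simp add: T_def)
      then show "S \<in> (\<Union>a\<in>Pt. T a)" using aP by auto
    qed
    have "(\<Sum>S\<in>Pow {..<n}. indicator (sw S -` B \<inter> space ?P) Z) = real (card {S\<in>Pow {..<n}. sw S Z \<in> B})"
      using Z by (simp add: indicator_def sum.If_cases Int_def)
    also have "\<dots> \<le> real (card (\<Union>a\<in>Pt. T a))"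
      by (intro of_nat_mono card_mono sub) (auto simp: T_def finPt)
    also have "\<dots> \<le> real (\<Sum>a\<in>Pt. card (T a))"
      by (intro of_nat_mono card_UN_le finPt)
    also have "\<dots> = (\<Sum>a\<in>Pt. real (card (T a)))" by simp
    also have "\<dots> \<le> (\<Sum>a\<in>Pt. 2 * 2 ^ n * exp (- r\<^sup>2 / (2 * real n)))"
    proof (rule sum_mono)
      fix a assume a: "a \<in> Pt"
      then obtain k where ak: "a = (\<lambda>j\<in>{..<2*n}. G k (Z j))" by (auto simp: Pt_def)
      have "\<bar>a i - a (n + i)\<bar> \<le> 1" if "i < n" for i
        using Gb[OF Zc, of i k] Gb[OF Zc, of "n+i" k] that unfolding ak by auto
      then show "real (card (T a)) \<le> 2 * 2 ^ n * exp (- r\<^sup>2 / (2 * real n))"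
        unfolding T_def by (intro rad_tail n r)
    qed
    also have "\<dots> = real (card Pt) * (2 * 2 ^ n * exp (- r\<^sup>2 / (2 * real n)))" by simp
    also have "\<dots> \<le> Cb" unfolding Cb_def by (intro mult_right_mono cPt) auto
    finally show ?thesis .
  qed
  have "2 ^ n * measure ?P B = (\<Sum>S\<in>Pow {..<n}. measure ?P B)" by (simp add: card_Pow)
  also have "\<dots> = (\<Sum>S\<in>Pow {..<n}. measure ?P (sw S -` B \<inter> space ?P))"
    by (intro sum.cong refl) (unfold sw_def, rule swap_measure[OF chi _ Bsets], auto)
  also have "\<dots> = (\<Sum>S\<in>Pow {..<n}. \<integral>Z. indicator (sw S -` B \<inter> space ?P) Z \<partial>?P)"
    by (intro sum.cong refl) (simp add: measurable_sets[OF swm Bsets])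
  also have "\<dots> = (\<integral>Z. (\<Sum>S\<in>Pow {..<n}. indicator (sw S -` B \<inter> space ?P) Z) \<partial>?P)"
    by (rule Bochner_Integration.integral_sum[symmetric]) (auto intro!: P.integrable_const_bound[where B=1] borel_measurable_indicator measurable_sets[OF swm Bsets])
  also have "\<dots> \<le> (\<integral>Z. Cb \<partial>?P)"
  proof (rule integral_mono)
    have sm: "(\<lambda>Z. \<Sum>S\<in>Pow {..<n}. indicator (sw S -` B \<inter> space ?P) Z :: real) \<in> borel_measurable ?P"
      by (intro borel_measurable_sum borel_measurable_indicator measurable_sets[OF swm Bsets])
    have sb: "\<bar>\<Sum>S\<in>Pow {..<n}. indicator (sw S -` B \<inter> space ?P) Z :: real\<bar> \<le> 2 ^ n" for Z
    proof -
      have "(\<Sum>S\<in>Pow {..<n}. indicator (sw S -` B \<inter> space ?P) Z :: real) \<le> (\<Sum>S\<in>Pow {..<n}. 1)"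
        by (intro sum_mono) (auto simp: indicator_def)
      also have "\<dots> = 2 ^ n" by (simp add: card_Pow)
      finally show ?thesis by (simp add: sum_nonneg)
    qed
    show "integrable ?P (\<lambda>Z. \<Sum>S\<in>Pow {..<n}. indicator (sw S -` B \<inter> space ?P) Z :: real)"
      by (rule P.integrable_const_bound[where B="2^n"]) (use sm sb in auto)
  qed (use point in auto)
  also have "\<dots> = Cb" by (simp add: P.prob_space)
  finally have "2 ^ n * measure ?P B \<le> Cb" .
  then have "measure ?P B \<le> Cb / 2 ^ n" by (simp add: field_simps)
  also have "\<dots> = C * (2 * exp (- r\<^sup>2 / (2 * real n)))" by (simp add: Cb_def)
  finally show ?thesis unfolding B_def .
qed
lemma pat_bound:
  assumes db: "db \<ge> 1"
  shows "finite ((\<lambda>k. \<lambda>j\<in>{..<N}. gk db m k (Z j)) ` UNIV) \<and>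
         real (card ((\<lambda>k. \<lambda>j\<in>{..<N}. gk db m k (Z j)) ` UNIV)) \<le> 2 * real (\<Sum>i\<le>2*db. N choose i)"
proof -
  define KK where "KK = {K. K \<subseteq> {..<N} \<and> card K \<le> 2 * db}"
  define h where "h = (\<lambda>(w::bool, T::nat set). \<lambda>j\<in>{..<N}. if j \<in> T then (if w then Z j m else 1) else 0)"
  have finKK: "finite KK" unfolding KK_def by (rule finite_subset[of _ "Pow {..<N}"]) auto
  have sub: "(\<lambda>k. \<lambda>j\<in>{..<N}. gk db m k (Z j)) ` UNIV \<subseteq> h ` (UNIV \<times> bbox db N Z ` KK)"
  proof
    fix x assume "x \<in> (\<lambda>k. \<lambda>j\<in>{..<N}. gk db m k (Z j)) ` UNIV"
    then obtain w cs es where x: "x = (\<lambda>j\<in>{..<N}. gk db m (w, cs, es) (Z j))" by auto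
    define T where "T = {j. j < N \<and> (\<forall>l<db. (\<lambda>l. of_rat (cs ! l)) l \<le> Z j l \<and> Z j l < (\<lambda>l. of_rat (es ! l)) l)}"
    have T: "T \<in> bbox db N Z ` KK" unfolding T_def KK_def by (rule trace_in_bbox[OF db])
    have "x = h (w, T)"
      unfolding x h_def by (auto simp: T_def gk_def inbox_def restrict_def fun_eq_iff)
    then show "x \<in> h ` (UNIV \<times> bbox db N Z ` KK)" using T by auto
  qed
  have fin2: "finite (h ` (UNIV \<times> bbox db N Z ` KK))" using finKK by auto
  have "card ((\<lambda>k. \<lambda>j\<in>{..<N}. gk db m k (Z j)) ` UNIV) \<le> card (h ` (UNIV \<times> bbox db N Z ` KK))"
    by (rule card_mono[OF fin2 sub])
  also have "\<dots> \<le> card ((UNIV::bool set) \<times> bbox db N Z ` KK)" using card_image_le[of "UNIV \<times> bbox db N Z ` KK" h] finKK by simp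
  also have "\<dots> = 2 * card (bbox db N Z ` KK)" by (simp add: card_cartesian_product)
  also have "\<dots> \<le> 2 * card KK" using card_image_le[OF finKK] by simp
  also have "\<dots> \<le> 2 * (\<Sum>i\<le>2*db. N choose i)" unfolding KK_def using card_small_subsets by simp
  finally show ?thesis using finite_subset[OF sub fin2] by (simp del: of_nat_sum add: of_nat_sum[symmetric])
qed
definition gq :: "nat \<Rightarrow> nat \<Rightarrow> bool \<Rightarrow> query \<Rightarrow> point \<Rightarrow> real" where
  "gq db m w q p = (if matches db p q then (if w then p m else 1) else 0)"

lemma gq_meas: assumes "sets chi = sets (M0 db)" "m < db" shows "gq db m w q \<in> borel_measurable chi"
proof -
  have [measurable]: "(\<lambda>p. p j) \<in> borel_measurable chi" if "j < db" for j using coord_meas[OF assms(1) that] .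
  have [measurable]: "(\<lambda>p. p m) \<in> borel_measurable chi" using coord_meas[OF assms] .
  have [measurable]: "Measurable.pred chi (\<lambda>p. matches db p q)" unfolding matches_def by measurable
  show ?thesis unfolding gq_def by measurable
qed

lemma gq_bounds: assumes "sets chi = sets (M0 db)" "m < db" "p \<in> space chi"
  shows "0 \<le> gq db m w q p" "gq db m w q p \<le> 1"
  using assms space_chi[OF assms(1)] by (auto simp: gq_def PiE_def Pi_def)

lemma rat_approx: "\<exists>ra :: real \<Rightarrow> nat \<Rightarrow> rat. \<forall>y k. y - inverse (real (Suc k)) < of_rat (ra y k) \<and> of_rat (ra y k) < y"
proof -
  have "\<forall>y k. \<exists>q::rat. y - inverse (real (Suc k)) < of_rat q \<and> of_rat q < y"
  proof (intro allI)
    fix y :: real and k :: nat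
    have "y - inverse (real (Suc k)) < y" by simp
    then obtain r where r: "r \<in> \<rat>" "y - inverse (real (Suc k)) < r" "r < y" using Rats_dense_in_real by blast
    then obtain q where "r = of_rat q" by (auto elim: Rats_cases)
    then show "\<exists>q::rat. y - inverse (real (Suc k)) < of_rat q \<and> of_rat q < y" using r by auto
  qed
  then show ?thesis by metis
qed

lemma ev_inv_lt: assumes "(d::real) > 0" shows "eventually (\<lambda>k. inverse (real (Suc k)) < d) sequentially"
  using order_tendstoD(2)[OF LIMSEQ_inverse_real_of_nat assms] .

lemma approx_box:
  fixes chi :: "point measure"
  assumes chi: "prob_space chi" and sets: "sets chi = sets (M0 db)" and m: "m < db"
    and D: "\<And>i. i < n \<Longrightarrow> D i \<in> space chi"
    and dev: "\<bar>(\<Sum>i<n. gq db m w q (D i)) - real n * (\<integral>p. gq db m w q p \<partial>chi)\<bar> > a"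
  shows "\<exists>k. \<bar>(\<Sum>i<n. gk db m k (D i)) - real n * (\<integral>p. gk db m k p \<partial>chi)\<bar> \<ge> a"
proof -
  interpret chi: prob_space chi by fact
  obtain ra :: "real \<Rightarrow> nat \<Rightarrow> rat" where ra: "\<And>y k. y - inverse (real (Suc k)) < of_rat (ra y k)" "\<And>y k. of_rat (ra y k) < y"
    using rat_approx by blast
  obtain c r where q: "q = (c, r)" by (cases q)
  define ks where "ks k = (w, map (\<lambda>j. ra (c j) k) [0..<db], map (\<lambda>j. ra (c j + r j) k) [0..<db])" for k
  have conv: "(\<lambda>k. gk db m (ks k) p) \<longlonglongrightarrow> gq db m w q p" for p
  proof (rule tendsto_eventually)
    have "\<forall>l\<in>{..<db}. eventually (\<lambda>k. (of_rat (ra (c l) k) \<le> p l \<longleftrightarrow> c l \<le> p l) \<and>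
                                      (p l < of_rat (ra (c l + r l) k) \<longleftrightarrow> p l < c l + r l)) sequentially"
    proof
      fix l assume "l \<in> {..<db}"
      have e1: "eventually (\<lambda>k. (of_rat (ra (c l) k) \<le> p l \<longleftrightarrow> c l \<le> p l)) sequentially"
      proof (cases "c l \<le> p l")
        case True
        have "of_rat (ra (c l) k) \<le> p l" for k using ra(2)[of "c l" k] True by linarith
        then show ?thesis using True by simp
      next
        case False
        then have "c l - p l > 0" by simp
        from ev_inv_lt[OF this] show ?thesis
        proof (rule eventually_mono)
          fix k assume "inverse (real (Suc k)) < c l - p l"
          then show "(of_rat (ra (c l) k) \<le> p l \<longleftrightarrow> c l \<le> p l)" using ra(1)[of "c l" k] False by auto
        qed
      qed
      have e2: "eventually (\<lambda>k. (p l < of_rat (ra (c l + r l) k) \<longleftrightarrow> p l < c l + r l)) sequentially"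
      proof (cases "p l < c l + r l")
        case False
        have "\<not> p l < of_rat (ra (c l + r l) k)" for k using ra(2)[of "c l + r l" k] False by linarith
        then show ?thesis using False by simp
      next
        case True
        then have "c l + r l - p l > 0" by simp
        from ev_inv_lt[OF this] show ?thesis
        proof (rule eventually_mono)
          fix k assume "inverse (real (Suc k)) < c l + r l - p l"
          then show "(p l < of_rat (ra (c l + r l) k) \<longleftrightarrow> p l < c l + r l)" using ra(1)[of "c l + r l" k] True by auto
        qed
      qed
      show "eventually (\<lambda>k. (of_rat (ra (c l) k) \<le> p l \<longleftrightarrow> c l \<le> p l) \<and>
                           (p l < of_rat (ra (c l + r l) k) \<longleftrightarrow> p l < c l + r l)) sequentially"
        using eventually_conj[OF e1 e2] .
    qed
    then have "eventually (\<lambda>k. \<forall>l\<in>{..<db}. (of_rat (ra (c l) k) \<le> p l \<longleftrightarrow> c l \<le> p l) \<and>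
                                      (p l < of_rat (ra (c l + r l) k) \<longleftrightarrow> p l < c l + r l)) sequentially"
      by (rule eventually_ball_finite[rotated]) simp
    then show "eventually (\<lambda>k. gk db m (ks k) p = gq db m w q p) sequentially"
    proof (rule eventually_mono)
      fix k assume H: "\<forall>l\<in>{..<db}. (of_rat (ra (c l) k) \<le> p l \<longleftrightarrow> c l \<le> p l) \<and>
                                      (p l < of_rat (ra (c l + r l) k) \<longleftrightarrow> p l < c l + r l)"
      have "inbox db (ks k) p \<longleftrightarrow> matches db p q"
        using H by (auto simp: inbox_def matches_def ks_def q)
      then show "gk db m (ks k) p = gq db m w q p" by (simp add: gk_def gq_def ks_def)
    qed
  qed
  have c1: "(\<lambda>k. \<Sum>i<n. gk db m (ks k) (D i)) \<longlonglongrightarrow> (\<Sum>i<n. gq db m w q (D i))"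
    by (intro tendsto_sum conv)
  have c2: "(\<lambda>k. \<integral>p. gk db m (ks k) p \<partial>chi) \<longlonglongrightarrow> (\<integral>p. gq db m w q p \<partial>chi)"
  proof (rule integral_dominated_convergence[where w="\<lambda>_. 1"])
    show "AE x in chi. (\<lambda>k. gk db m (ks k) x) \<longlonglongrightarrow> gq db m w q x" by (simp add: conv)
    show "AE x in chi. norm (gk db m (ks k) x) \<le> 1" for k
      using gk_bounds[OF sets m] by (intro AE_I2) auto
  qed (use gq_meas[OF sets m] gk_meas[OF sets m] in auto)
  have "(\<lambda>k. \<bar>(\<Sum>i<n. gk db m (ks k) (D i)) - real n * (\<integral>p. gk db m (ks k) p \<partial>chi)\<bar>)
          \<longlonglongrightarrow> \<bar>(\<Sum>i<n. gq db m w q (D i)) - real n * (\<integral>p. gq db m w q p \<partial>chi)\<bar>"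
    by (intro tendsto_intros c1 c2)
  from order_tendstoD(1)[OF this dev] obtain k where
    "\<bar>(\<Sum>i<n. gk db m (ks k) (D i)) - real n * (\<integral>p. gk db m (ks k) p \<partial>chi)\<bar> > a"
    by (auto dest: eventually_happens)
  then show ?thesis by (intro exI[of _ "ks k"]) simp
qed
lemma err_algebra:
  fixes P S Cn Sn xi eps \<delta> n :: real
  assumes xi: "xi > 0" and eps: "eps > 0" and P: "P \<ge> xi" and S0: "0 \<le> S" and SP: "S \<le> P" and n: "n > 0"
    and hC: "\<bar>Cn - n*P\<bar> \<le> n*\<delta>" and hS: "\<bar>Sn - n*S\<bar> \<le> n*\<delta>" and d: "\<delta> = xi*eps/(2*(1+eps))"
  shows "\<bar>(n*S)/(n*P) - Sn/Cn\<bar> / (\<bar>(n*S)/(n*P)\<bar> + 1) \<le> eps/2"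
proof -
  define a where "a = S / P"
  define c where "c = Cn / n"
  define sn where "sn = Sn / n"
  have Pp: "P > 0" using xi P by linarith
  have a0: "0 \<le> a" and a1: "a \<le> 1" using S0 SP Pp by (auto simp: a_def)
  have aP: "a * P = S" using Pp by (simp add: a_def)
  have e1: "(n*S)/(n*P) = a" using n by (simp add: a_def)
  have e2: "Sn/Cn = sn/c" using n by (simp add: c_def sn_def)
  have hc: "\<bar>c - P\<bar> \<le> \<delta>"
  proof -
    have "\<bar>c - P\<bar> = \<bar>Cn - n*P\<bar> / n" using n by (simp add: c_def field_simps abs_div_pos[symmetric])
    also have "\<dots> \<le> n*\<delta> / n" using hC n by (intro divide_right_mono) auto
    finally show ?thesis using n by simp
  qed
  have hs: "\<bar>sn - S\<bar> \<le> \<delta>"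
  proof -
    have "\<bar>sn - S\<bar> = \<bar>Sn - n*S\<bar> / n" using n by (simp add: sn_def field_simps abs_div_pos[symmetric])
    also have "\<dots> \<le> n*\<delta> / n" using hS n by (intro divide_right_mono) auto
    finally show ?thesis using n by simp
  qed
  have d0: "\<delta> \<ge> 0" using d xi eps by simp
  have dxi: "\<delta> * (2 + eps) = xi * eps * ((2 + eps) / (2 * (1 + eps)))" using d by simp
  have "(2 + eps) / (2 * (1 + eps)) \<le> 1" using eps by (simp add: field_simps)
  then have "xi * eps * ((2 + eps) / (2 * (1 + eps))) \<le> xi * eps * 1"
    using xi eps by (intro mult_left_mono) auto
  then have dxi2: "\<delta> * (2 + eps) \<le> xi * eps" unfolding dxi by simp
  have dlt: "\<delta> < xi"
  proof (rule ccontr)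
    assume "\<not> \<delta> < xi"
    then have "xi * eps \<le> \<delta> * eps" using eps by (intro mult_right_mono) auto
    then have "\<delta> * (2 + eps) > xi * eps" using \<open>\<not> \<delta> < xi\<close> xi by (simp add: algebra_simps)
    then show False using dxi2 by simp
  qed
  have cpos: "c \<ge> xi - \<delta>" using hc P by linarith
  have cp: "c > 0" using cpos dlt by linarith
  have num: "\<bar>a * c - sn\<bar> \<le> \<delta> * (1 + a)"
  proof -
    have "a * c - sn = a * (c - P) + (S - sn)" using aP by (simp add: algebra_simps)
    then have "\<bar>a * c - sn\<bar> \<le> \<bar>a * (c - P)\<bar> + \<bar>S - sn\<bar>" by simp
    also have "\<bar>a * (c - P)\<bar> \<le> a * \<delta>" using hc a0 by (simp add: abs_mult mult_left_mono)
    also have "\<bar>S - sn\<bar> \<le> \<delta>" using hs by simp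
    finally show ?thesis by (simp add: algebra_simps)
  qed
  have "\<bar>a - sn/c\<bar> = \<bar>a * c - sn\<bar> / c" using cp by (simp add: field_simps abs_div_pos[symmetric])
  also have "\<dots> \<le> \<delta> * (1 + a) / c" using num cp by (intro divide_right_mono) auto
  also have "\<dots> \<le> \<delta> * (1 + a) / (xi - \<delta>)" using cpos dlt d0 a0 by (intro divide_left_mono) auto
  finally have "\<bar>a - sn/c\<bar> / (a + 1) \<le> \<delta> * (1 + a) / (xi - \<delta>) / (a + 1)" using a0
    by (intro divide_right_mono) auto
  then have "\<bar>a - sn/c\<bar> / (\<bar>a\<bar> + 1) \<le> \<delta> * (1 + a) / (xi - \<delta>) / (a + 1)" using a0 by simp
  also have "\<dots> = \<delta> / (xi - \<delta>)"
  proof -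
    have "xi - \<delta> \<noteq> 0" "a + 1 \<noteq> 0" using dlt a0 by auto
    have "\<delta> * (1 + a) / (xi - \<delta>) / (a + 1) = (\<delta> / (xi - \<delta>)) * ((a + 1) / (a + 1))"
      by (simp add: add.commute)
    also have "(a + 1) / (a + 1) = 1" using \<open>a + 1 \<noteq> 0\<close> by simp
    finally show ?thesis by simp
  qed
  also have "\<dots> \<le> eps / 2"
  proof -
    have "\<delta> * 2 \<le> eps * (xi - \<delta>)" using dxi2 by (simp add: algebra_simps)
    then show ?thesis using dlt by (simp add: field_simps)
  qed
  finally show ?thesis unfolding e1 e2 .
qed
lemma y_exp_neg: "(y::real) * exp (- y) \<le> exp (-1)"
proof -
  have "y \<le> exp (y - 1)" using exp_ge_add_one_self[of "y - 1"] by simp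
  then have "y * exp (- y) \<le> exp (y - 1) * exp (- y)" by (intro mult_right_mono) auto
  also have "\<dots> = exp (-1)" by (simp flip: exp_add)
  finally show ?thesis .
qed

lemma le_mult_ge1: "(a::real) \<ge> 0 \<Longrightarrow> K \<ge> 1 \<Longrightarrow> a \<le> K * a"
  using mult_right_mono[of 1 K a] by simp

lemma lt_exp_of: assumes "(a::real) * exp (- y) < 1" shows "a < exp y"
proof -
  have "a * exp (- y) * exp y < 1 * exp y" using assms by (intro mult_strict_right_mono) auto
  moreover have "a * exp (- y) * exp y = a" by (simp add: mult.assoc flip: exp_add)
  ultimately show ?thesis by simp
qed

lemma final_ineq:
  fixes t :: real and n d :: nat
  assumes d: "d \<ge> 1" and t: "0 < t" "t \<le> 1" and n: "n > 0"
    and R: "(1024::real) ^ (d + 1) * real d * (1 / t) ^ d * exp (- (1 / 1024) * t\<^sup>2 * real n) < 1"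
  shows "d \<le> 2 * n" "2 * exp (- real n * (t/4)\<^sup>2 / 2) \<le> 1/2"
    "8 * (exp 1 * real (2 * n) / real d) ^ d * exp (- (real n * (t/4) / 2)\<^sup>2 / (2 * real n))
       \<le> (1024::real) ^ (d + 1) * real d * (1 / t) ^ d * exp (- (1 / 1024) * t\<^sup>2 * real n)"
proof -
  define x where "x = t\<^sup>2 * real n"
  have x0: "x > 0" using t n by (simp add: x_def)
  have it1: "(1 / t) ^ d \<ge> 1" using t by (simp add: one_le_power)
  have K1: "(1024::real) ^ (d + 1) * real d \<ge> 1024 ^ (d + 1)" using d
    by (metis mult.right_neutral mult_left_mono of_nat_1 of_nat_le_iff zero_le_power zero_le_numeral)
  have Kd: "(1024::real) ^ (d + 1) \<ge> 1" by (rule one_le_power) simp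
  have Kge1: "(1024::real) ^ (d + 1) * real d \<ge> 1" using K1 Kd by linarith
  have expx: "exp (- (1 / 1024) * t\<^sup>2 * real n) = exp (- x / 1024)" by (simp add: x_def)
  have R': "(1024::real) ^ (d + 1) * real d * (1 / t) ^ d * exp (- x / 1024) < 1" using R expx by simp
  have i1: "(1 / t) ^ d < exp (x / 1024)"
  proof -
    have "(1 / t) ^ d * exp (- x / 1024) \<le> ((1024::real) ^ (d + 1) * real d) * ((1 / t) ^ d * exp (- x / 1024))"
      using Kge1 t by (intro le_mult_ge1) auto
    with R' have "(1 / t) ^ d * exp (- x / 1024) < 1" by linarith
    then have "(1 / t) ^ d * exp (- (x / 1024)) < 1" by simp
    then show ?thesis by (rule lt_exp_of)
  qed
  have i2: "(1024::real) ^ (d + 1) < exp (x / 1024)"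
  proof -
    have "1 * 1 \<le> real d * (1 / t) ^ d" by (rule mult_mono) (use d it1 in auto)
    then have "(real d * (1 / t) ^ d) \<ge> 1" by simp
    then have "(1024::real) ^ (d + 1) * exp (- x / 1024) \<le> (real d * (1 / t) ^ d) * ((1024::real) ^ (d + 1) * exp (- x / 1024))"
      by (intro le_mult_ge1) auto
    also have "\<dots> = (1024::real) ^ (d + 1) * real d * (1 / t) ^ d * exp (- x / 1024)" by (simp add: mult_ac)
    finally have "(1024::real) ^ (d + 1) * exp (- x / 1024) \<le> (1024::real) ^ (d + 1) * real d * (1 / t) ^ d * exp (- x / 1024)" .
    with R' have "(1024::real) ^ (d + 1) * exp (- x / 1024) < 1" by linarith
    then have "(1024::real) ^ (d + 1) * exp (- (x / 1024)) < 1" by simp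
    then show ?thesis by (rule lt_exp_of)
  qed
  have e1024: "exp (real (d + 1)) \<le> (1024::real) ^ (d + 1)"
  proof -
    have "exp (real (d + 1)) = exp 1 ^ (d + 1)" by (metis exp_of_nat_mult mult.right_neutral)
    also have "\<dots> \<le> 1024 ^ (d + 1)" using exp_le by (intro power_mono) auto
    finally show ?thesis .
  qed
  have xd: "x > 1024 * real (d + 1)"
  proof -
    have "exp (real (d + 1)) < exp (x / 1024)" using e1024 i2 by linarith
    then show ?thesis by simp
  qed
  have xn: "x \<le> real n" using t n unfolding x_def by (simp add: power_le_one mult_left_le_one_le)
  show "d \<le> 2 * n" using xd xn by simp
  show "2 * exp (- real n * (t/4)\<^sup>2 / 2) \<le> 1/2"
  proof -
    have "- real n * (t/4)\<^sup>2 / 2 = - x / 32" by (simp add: x_def power2_eq_square field_simps)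
    also have "\<dots> \<le> - 2" using xd by simp
    finally have "exp (- real n * (t/4)\<^sup>2 / 2) \<le> exp (-2)" by simp
    also have "exp (-2::real) \<le> 1/4"
    proof -
      have e1: "exp (1::real) \<ge> 2" using exp_ge_add_one_self[of 1] by simp
      have "exp (2::real) = exp 1 * exp 1" by (simp flip: exp_add)
      also have "\<dots> \<ge> 2 * 2" using e1 by (intro mult_mono) auto
      finally have "exp (2::real) \<ge> 4" by simp
      then show ?thesis by (simp add: exp_minus field_simps)
    qed
    finally show ?thesis by simp
  qed
  show "8 * (exp 1 * real (2 * n) / real d) ^ d * exp (- (real n * (t/4) / 2)\<^sup>2 / (2 * real n))
       \<le> (1024::real) ^ (d + 1) * real d * (1 / t) ^ d * exp (- (1 / 1024) * t\<^sup>2 * real n)"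
  proof -
    define y where "y = 3 * x / (512 * real d)"
    have y0: "y \<ge> 0" using x0 d by (simp add: y_def)
    have ex: "exp (- (real n * (t/4) / 2)\<^sup>2 / (2 * real n)) = exp (- x / 128)"
      using n by (simp add: x_def power2_eq_square field_simps)
    have base: "exp 1 * real (2 * n) / real d = (1 / t) ^ 2 * (1024 / 3 * exp 1 * y)"
      using t n d by (simp add: y_def x_def power2_eq_square field_simps)
    have P1: "(exp 1 * real (2 * n) / real d) ^ d = ((1 / t) ^ d * (1 / t) ^ d) * (1024 / 3 * exp 1 * y) ^ d"
    proof -
      have "(exp 1 * real (2 * n) / real d) ^ d = ((1 / t) ^ 2) ^ d * (1024 / 3 * exp 1 * y) ^ d"
        unfolding base by (rule power_mult_distrib)
      also have "((1 / t) ^ 2) ^ d = (1 / t) ^ d * (1 / t) ^ d"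
        by (metis power2_eq_square power_mult_distrib)
      finally show ?thesis .
    qed
    have P2: "exp (- x / 128) = exp (- 2 * x / 1024) * exp (- y) ^ d"
    proof -
      have "exp (- x / 128) = exp (- 2 * x / 1024) * exp (- real d * y)"
        using d by (simp add: y_def field_simps flip: exp_add)
      also have "exp (- real d * y) = exp (- y) ^ d" by (metis exp_of_nat_mult mult_minus_left mult_minus_right)
      finally show ?thesis .
    qed
    have P3: "(1024 / 3 * exp 1 * y) ^ d * exp (- y) ^ d = (1024 / 3 * exp 1 * (y * exp (- y))) ^ d"
      by (simp only: power_mult_distrib[symmetric] mult.assoc)
    have P4: "(1024 / 3 * exp 1 * (y * exp (- y))) ^ d \<le> 1024 ^ d"
    proof (rule power_mono)
      have "1024 / 3 * exp 1 * (y * exp (- y)) \<le> 1024 / 3 * exp 1 * exp (-1)"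
        using y_exp_neg[of y] by (intro mult_left_mono) auto
      also have "\<dots> = 1024 / 3" by (simp flip: exp_add)
      finally show "1024 / 3 * exp 1 * (y * exp (- y)) \<le> 1024" by simp
    qed (use y0 in simp)
    have "8 * (exp 1 * real (2 * n) / real d) ^ d * exp (- x / 128)
          = 8 * ((1 / t) ^ d * (1 / t) ^ d) * (((1024 / 3 * exp 1 * y) ^ d * exp (- y) ^ d) * exp (- 2 * x / 1024))"
      unfolding P1 P2 by (simp only: mult_ac)
    also have "\<dots> = 8 * ((1 / t) ^ d * (1 / t) ^ d) * ((1024 / 3 * exp 1 * (y * exp (- y))) ^ d * exp (- 2 * x / 1024))"
      unfolding P3 ..
    also have "\<dots> \<le> 8 * ((1 / t) ^ d * (1 / t) ^ d) * (1024 ^ d * exp (- 2 * x / 1024))"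
      using P4 t by (intro mult_left_mono mult_right_mono) auto
    also have "\<dots> \<le> 8 * ((1 / t) ^ d * exp (x / 1024)) * (1024 ^ d * exp (- 2 * x / 1024))"
      using i1 t by (intro mult_right_mono mult_left_mono) auto
    also have "\<dots> = 8 * 1024 ^ d * (1 / t) ^ d * exp (- x / 1024)"
      by (simp add: mult_ac flip: exp_add)
    also have "\<dots> \<le> 1024 ^ (d + 1) * real d * (1 / t) ^ d * exp (- x / 1024)"
    proof -
      have "8 * 1024 ^ d \<le> (1024::real) ^ (d + 1) * real d"
      proof -
        have "8 * (1024::real) ^ d \<le> 1024 ^ d * 1024" by simp
        also have "\<dots> = 1024 ^ (d + 1)" by simp
        also have "\<dots> \<le> 1024 ^ (d + 1) * real d" using K1 by simp
        finally show ?thesis .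
      qed
      then show ?thesis using t by (intro mult_right_mono) auto
    qed
    finally show ?thesis unfolding ex expx .
  qed
qed
lemma sum_ind_card: "(\<Sum>i<(n::nat). if P i then 1 else 0) = real (card {i. i < n \<and> P i})"
proof -
  have "(\<Sum>i<n. if P i then 1 else (0::real)) = (\<Sum>i\<in>{i\<in>{..<n}. P i}. 1)"
    by (rule sum.inter_filter[symmetric]) simp
  also have "{i\<in>{..<n}. P i} = {i. i < n \<and> P i}" by auto
  finally show ?thesis by simp
qed

lemma gq_False: "gq db m False q p = (if matches db p q then 1 else 0)"
  by (simp add: gq_def)

lemma fC_D_eq: "fC_D db n D q = (\<Sum>i<n. gq db m False q (D i))"
  unfolding fC_D_def gq_False by (simp add: sum_ind_card)

lemma fS_D_eq: "fS_D db m n D q = (\<Sum>i<n. gq db m True q (D i))"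
proof -
  have "fS_D db m n D q = (\<Sum>i\<in>{i\<in>{..<n}. matches db (D i) q}. D i m)"
    unfolding fS_D_def by (rule sum.cong) auto
  also have "\<dots> = (\<Sum>i<n. if matches db (D i) q then D i m else 0)"
    by (rule sum.inter_filter) simp
  also have "\<dots> = (\<Sum>i<n. gq db m True q (D i))"
    by (rule sum.cong) (auto simp: gq_def)
  finally show ?thesis .
qed

lemma reduction:
  fixes chi :: "point measure"
  assumes chi: "prob_space chi" and sets: "sets chi = sets (M0 db)" and m: "m < db"
    and n: "n > 0" and xi: "0 < xi" and eps: "eps > 0"
    and D: "D \<in> space (PiM {..<n} (\<lambda>_. chi))"
    and q: "q \<in> queries_xi db n chi xi" and e: "err db m n chi D q > eps / 2"
  shows "\<exists>k. \<bar>(\<Sum>i<n. gk db m k (D i)) - real n * (\<integral>p. gk db m k p \<partial>chi)\<bar> \<ge> real n * (xi * eps / (1 + eps) / 4)"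
proof -
  interpret chi: prob_space chi by fact
  have Di: "D i \<in> space chi" if "i < n" for i using D that by (auto simp: space_PiM PiE_def Pi_def)
  define P where "P = (\<integral>p. gq db m False q p \<partial>chi)"
  define S where "S = (\<integral>p. gq db m True q p \<partial>chi)"
  have gb: "\<bar>gq db m w q p\<bar> \<le> 1" if "p \<in> space chi" for w p using gq_bounds[OF sets m that] by auto
  have fC: "fC_chi db n chi q = real n * P"
    unfolding fC_chi_def db_measure_def fC_D_eq[of _ _ _ _ m] P_def
    using integral_sum_components[OF chi gq_meas[OF sets m] gb, of "{..<n}"] by simp
  have fS: "fS_chi db m n chi q = real n * S"
    unfolding fS_chi_def db_measure_def fS_D_eq S_def
    using integral_sum_components[OF chi gq_meas[OF sets m] gb, of "{..<n}"] by simp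
  have "xi \<le> fC_chi db n chi q / real n" using q by (simp add: queries_xi_def)
  then have Pxi: "P \<ge> xi" using n unfolding fC by simp
  have S0: "S \<ge> 0" unfolding S_def by (intro integral_nonneg_AE AE_I2) (use gq_bounds[OF sets m] in auto)
  have SP: "S \<le> P" unfolding S_def P_def
  proof (rule integral_mono)
    show "integrable chi (gq db m True q)" "integrable chi (gq db m False q)"
      by (auto intro!: chi.integrable_const_bound[where B=1] gq_meas[OF sets m] gb)
    fix p assume "p \<in> space chi"
    then show "gq db m True q p \<le> gq db m False q p"
      using space_chi[OF sets] m by (auto simp: gq_def PiE_def Pi_def)
  qed
  define \<delta> where "\<delta> = xi * eps / (2 * (1 + eps))"
  have "\<exists>w. \<bar>(\<Sum>i<n. gq db m w q (D i)) - real n * (\<integral>p. gq db m w q p \<partial>chi)\<bar> > real n * \<delta>"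
  proof (rule ccontr)
    assume "\<not> ?thesis"
    then have hC: "\<bar>fC_D db n D q - real n * P\<bar> \<le> real n * \<delta>" and hS: "\<bar>fS_D db m n D q - real n * S\<bar> \<le> real n * \<delta>"
      unfolding fC_D_eq[of _ _ _ _ m] fS_D_eq P_def S_def by (auto simp: not_less)
    have "err db m n chi D q \<le> eps / 2"
      unfolding err_def fA_chi_def fA_D_def fC fS
      by (rule err_algebra[OF xi eps Pxi S0 SP _ hC hS \<delta>_def]) (use n in simp)
    then show False using e by simp
  qed
  then obtain w where w: "\<bar>(\<Sum>i<n. gq db m w q (D i)) - real n * (\<integral>p. gq db m w q p \<partial>chi)\<bar> > real n * \<delta>" by blast
  have "real n * (xi * eps / (1 + eps) / 4) \<le> real n * \<delta>"
    using n xi eps by (intro mult_left_mono) (auto simp: \<delta>_def field_simps)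
  then have "\<bar>(\<Sum>i<n. gq db m w q (D i)) - real n * (\<integral>p. gq db m w q p \<partial>chi)\<bar> > real n * (xi * eps / (1 + eps) / 4)"
    using w by linarith
  from approx_box[OF chi sets m, where n=n and D=D and w=w and q=q, OF Di this] show ?thesis by blast
qed
theorem lemma3p6:
  shows "\<exists>\<kappa>::real. \<kappa> > 0 \<and>
    (\<forall>(db::nat) (n::nat) (m::nat) (chi::point measure) (xi::real) (\<epsilon>::real).
       db \<ge> 1 \<longrightarrow> m < db \<longrightarrow>
       prob_space chi \<longrightarrow>
       sets chi = sets (PiM {..<db} (\<lambda>_. restrict_space borel {0..1::real})) \<longrightarrow>
       0 < xi \<longrightarrow> xi \<le> 1 \<longrightarrow> \<epsilon> > 0 \<longrightarrow>
       (let d = 2 * db in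
        outer_prob_le (db_measure n chi)
          {D \<in> space (db_measure n chi).
             (SUP q\<in>queries_xi db n chi xi. ereal (err db m n chi D q)) \<ge> ereal \<epsilon>}
          (\<kappa> ^ (d + 1) * real d * ((1 + \<epsilon>) / (xi * \<epsilon>)) ^ d
             * exp (- (1 / \<kappa>) * ((xi * \<epsilon>) / (1 + \<epsilon>))\<^sup>2 * real n))))"
proof (intro exI[of _ "1024::real"] conjI allI impI)
  show "(1024::real) > 0" by simp
  fix db n m :: nat and chi :: "point measure" and xi \<epsilon> :: real
  assume db: "db \<ge> 1" and m: "m < db" and chi: "prob_space chi"
    and sets0: "sets chi = sets (PiM {..<db} (\<lambda>_. restrict_space borel {0..1::real}))"
    and xi0: "0 < xi" and xi1: "xi \<le> 1" and eps: "\<epsilon> > 0"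
  have sets: "sets chi = sets (M0 db)" using sets0 by (simp add: M0_def)
  interpret chi: prob_space chi by fact
  define t where "t = xi * \<epsilon> / (1 + \<epsilon>)"
  define d where "d = 2 * db"
  have d1: "d \<ge> 1" using db by (simp add: d_def)
  have t0: "t > 0" using xi0 eps by (simp add: t_def)
  have t1: "t \<le> 1"
  proof -
    have "\<epsilon> / (1 + \<epsilon>) \<le> 1" using eps by simp
    then have "xi * (\<epsilon> / (1 + \<epsilon>)) \<le> 1 * 1" using xi0 xi1 eps by (intro mult_mono) auto
    then show ?thesis by (simp add: t_def)
  qed
  have rw1: "(1 + \<epsilon>) / (xi * \<epsilon>) = 1 / t" by (simp add: t_def)
  have rw2: "(xi * \<epsilon>) / (1 + \<epsilon>) = t" by (simp add: t_def)
  let ?M = "db_measure n chi"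
  let ?P1 = "PiM {..<n} (\<lambda>_. chi)"
  have M: "?M = ?P1" by (simp add: db_measure_def)
  interpret P1: prob_space ?P1 by (intro prob_space_PiM) (use chi in auto)
  define E where "E = {D \<in> space ?M. (SUP q\<in>queries_xi db n chi xi. ereal (err db m n chi D q)) \<ge> ereal \<epsilon>}"
  define Rv where "Rv = (1024::real) ^ (d + 1) * real d * (1 / t) ^ d * exp (- (1 / 1024) * t\<^sup>2 * real n)"
  have Rv0: "Rv \<ge> 0" unfolding Rv_def using t0 by simp
  have goal: "outer_prob_le ?M E Rv"
  proof (cases "n = 0")
    case True
    have "queries_xi db n chi xi = {}" using True xi0 by (auto simp: queries_xi_def)
    then have "E = {}" using eps by (simp add: E_def bot_ereal_def)
    then show ?thesis unfolding outer_prob_le_def using Rv0 by (intro bexI[of _ "{}"]) auto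
  next
    case False
    then have n: "n > 0" by simp
    show ?thesis
    proof (cases "Rv < 1")
      case False
      then show ?thesis unfolding outer_prob_le_def M E_def
        by (intro bexI[of _ "space ?P1"]) (auto simp: P1.prob_space)
    next
      case True
      have R: "(1024::real) ^ (d + 1) * real d * (1 / t) ^ d * exp (- (1 / 1024) * t\<^sup>2 * real n) < 1"
        using True by (simp add: Rv_def)
      note fi = final_ineq[OF d1 t0 t1 n R]
      define s where "s = t / 4"
      have s0: "s > 0" using t0 by (simp add: s_def)
      define A where "A = {D \<in> space ?P1. \<exists>k. \<bar>(\<Sum>i<n. gk db m k (D i)) - real n * (\<integral>p. gk db m k p \<partial>chi)\<bar> \<ge> real n * s}"
      define B where "B = {Z \<in> space (PiM {..<2*n} (\<lambda>_. chi)).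
             \<exists>k. \<bar>(\<Sum>i<n. gk db m k (Z i)) - (\<Sum>i<n. gk db m k (Z (n + i)))\<bar> \<ge> real n * s / 2}"
      have [measurable]: "(\<lambda>D. gk db m k (D i)) \<in> borel_measurable ?P1" if "i < n" for k i
        by (rule measurable_compose[OF measurable_component_singleton[of i] gk_meas[OF sets m]]) (use that in simp)
      have Asets: "A \<in> sets ?P1" unfolding A_def by measurable
      have EA: "E \<subseteq> A"
      proof
        fix D assume D: "D \<in> E"
        then have DS: "D \<in> space ?P1" by (simp add: E_def M)
        have "ereal (\<epsilon> / 2) < ereal \<epsilon>" using eps by simp
        also have "\<dots> \<le> (SUP q\<in>queries_xi db n chi xi. ereal (err db m n chi D q))" using D by (simp add: E_def)
        finally obtain q where q: "q \<in> queries_xi db n chi xi" and e: "ereal (\<epsilon> / 2) < ereal (err db m n chi D q)"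
          by (auto simp: less_SUP_iff)
        from e have e': "err db m n chi D q > \<epsilon> / 2" by simp
        have "\<exists>k. \<bar>(\<Sum>i<n. gk db m k (D i)) - real n * (\<integral>p. gk db m k p \<partial>chi)\<bar> \<ge> real n * (xi * \<epsilon> / (1 + \<epsilon>) / 4)"
          by (rule reduction[OF chi sets m n xi0 eps DS q e'])
        then show "D \<in> A" using DS by (simp add: A_def s_def t_def)
      qed
      have sym: "measure ?P1 A \<le> 2 * measure (PiM {..<2*n} (\<lambda>_. chi)) B"
        unfolding A_def B_def
        by (rule symmetrization[OF chi gk_meas[OF sets m] _ n s0]) (use gk_bounds[OF sets m] fi(2) in \<open>auto simp: s_def\<close>)
      define C where "C = 2 * real (\<Sum>i\<le>2*db. (2*n) choose i)"
      have swb: "measure (PiM {..<2*n} (\<lambda>_. chi)) B \<le> C * (2 * exp (- (real n * s / 2)\<^sup>2 / (2 * real n)))"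
        unfolding B_def
      proof (rule swap_bound[OF chi gk_meas[OF sets m] _ n])
        fix Z assume "Z \<in> space (PiM {..<2*n} (\<lambda>_. chi))"
        show "finite ((\<lambda>k. \<lambda>j\<in>{..<2*n}. gk db m k (Z j)) ` UNIV) \<and>
              real (card ((\<lambda>k. \<lambda>j\<in>{..<2*n}. gk db m k (Z j)) ` UNIV)) \<le> C"
          unfolding C_def by (rule pat_bound[OF db])
      qed (use gk_bounds[OF sets m] s0 in auto)
      have Cb: "C \<le> 2 * (exp 1 * real (2 * n) / real d) ^ d"
        unfolding C_def d_def using binom_sum_bound[of "2*db" "2*n"] d1 fi(1) by (simp add: d_def)
      have "measure ?P1 A \<le> 2 * (C * (2 * exp (- (real n * s / 2)\<^sup>2 / (2 * real n))))"
        using sym swb by linarith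
      also have "\<dots> \<le> 2 * ((2 * (exp 1 * real (2 * n) / real d) ^ d) * (2 * exp (- (real n * s / 2)\<^sup>2 / (2 * real n))))"
        using Cb by (intro mult_left_mono mult_right_mono) auto
      also have "\<dots> = 8 * (exp 1 * real (2 * n) / real d) ^ d * exp (- (real n * (t/4) / 2)\<^sup>2 / (2 * real n))"
        by (simp add: s_def)
      also have "\<dots> \<le> Rv" unfolding Rv_def by (rule fi(3))
      finally have mA: "measure ?P1 A \<le> Rv" .
      show ?thesis unfolding outer_prob_le_def M
        using Asets EA mA M by (intro bexI[of _ A]) auto
    qed
  qed
  show "let d = 2 * db in
        outer_prob_le (db_measure n chi)
          {D \<in> space (db_measure n chi).
             (SUP q\<in>queries_xi db n chi xi. ereal (err db m n chi D q)) \<ge> ereal \<epsilon>}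
          (1024 ^ (d + 1) * real d * ((1 + \<epsilon>) / (xi * \<epsilon>)) ^ d
             * exp (- (1 / 1024) * ((xi * \<epsilon>) / (1 + \<epsilon>))\<^sup>2 * real n))"
    using goal unfolding Let_def rw1 rw2 E_def Rv_def d_def .
qed

end
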